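(* Let $G=(V,A)$ be a finite directed graph with root $r\in V$ such that every vertex has a directed path to $r$ in $G$. Run the following cluster-popping algorithm. Include each arc of $A$ independently with probability $1/2$, giving a subgraph $(V,S)$. While $(V,S)$ has a cluster, choose (by any rule) a minimal cluster $C$ of $(V,S)$ and re-randomise, independently with probability $1/2$ each, the membership in $S$ of every arc $e\in A$ whose tail lies in $C$. Then the algorithm terminates with probability $1$. On termination, $(V,S)$ is a uniformly random root-connected spanning subgraph of $G$.
   Context: For an arc $e$, $e^-$ denotes its tail and $e^+$ its head. A spanning subgraph $(V,S)$, $S\subseteq A$, is root-connected if every $v\in V$ has a directed path to $r$ in $(V,S)$. A cluster of $(V,S)$ is a nonempty set $C\subseteq V\setminus\{r\}$ such that no arc $e\in S$ has $e^-\in C$ and $e^+\in V\setminus C$. A cluster is minimal if it contains no other cluster as a proper subset. $(V,S)$ is root-connected iff it has no cluster. *)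

theory Defs
  imports "HOL-Probability.Probability_Mass_Function"
begin

text \<open>Directed graph (V, A) with A a set of arcs; an arc e = (u, v) has tail fst e and head snd e.\<close>

definition root_connected :: "'v set \<Rightarrow> 'v \<Rightarrow> ('v \<times> 'v) set \<Rightarrow> bool" where
  "root_connected V r S \<longleftrightarrow> (\<forall>v\<in>V. (v, r) \<in> S\<^sup>*)"

definition is_cluster :: "'v set \<Rightarrow> 'v \<Rightarrow> ('v \<times> 'v) set \<Rightarrow> 'v set \<Rightarrow> bool" where
  "is_cluster V r S C \<longleftrightarrow> C \<noteq> {} \<and> C \<subseteq> V - {r} \<and>
     \<not> (\<exists>e\<in>S. fst e \<in> C \<and> snd e \<in> V - C)"

definition is_minimal_cluster :: "'v set \<Rightarrow> 'v \<Rightarrow> ('v \<times> 'v) set \<Rightarrow> 'v set \<Rightarrow> bool" where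
  "is_minimal_cluster V r S C \<longleftrightarrow> is_cluster V r S C \<and>
     \<not> (\<exists>C'. is_cluster V r S C' \<and> C' \<subset> C)"

definition has_cluster :: "'v set \<Rightarrow> 'v \<Rightarrow> ('v \<times> 'v) set \<Rightarrow> bool" where
  "has_cluster V r S \<longleftrightarrow> (\<exists>C. is_cluster V r S C)"

text \<open>Random subset of a finite set T: each element independently with probability 1/2.\<close>
definition random_subset :: "'a set \<Rightarrow> 'a set pmf" where
  "random_subset T = pmf_of_set (Pow T)"

text \<open>State of the algorithm: the history of subgraphs, most recent first
  (so the choice rule may depend on the whole history).\<close>
definition pop_step ::
  "'v set \<Rightarrow> 'v \<Rightarrow> ('v \<times> 'v) set \<Rightarrow> (('v \<times> 'v) set list \<Rightarrow> 'v set)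
   \<Rightarrow> ('v \<times> 'v) set list \<Rightarrow> ('v \<times> 'v) set list pmf" where
  "pop_step V r A sel h =
     (if has_cluster V r (hd h) then
        (let T = {e \<in> A. fst e \<in> sel h} in
          map_pmf (\<lambda>R. ((hd h - T) \<union> R) # h) (random_subset T))
      else return_pmf h)"

fun pop_run ::
  "'v set \<Rightarrow> 'v \<Rightarrow> ('v \<times> 'v) set \<Rightarrow> (('v \<times> 'v) set list \<Rightarrow> 'v set)
   \<Rightarrow> nat \<Rightarrow> ('v \<times> 'v) set list pmf" where
  "pop_run V r A sel 0 = map_pmf (\<lambda>S. [S]) (random_subset A)"
| "pop_run V r A sel (Suc n) = bind_pmf (pop_run V r A sel n) (pop_step V r A sel)"

end

theory Submission
  imports Defs
begin


lemma prob_bind_pmf: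
  "measure_pmf.prob (bind_pmf M f) E = (\<integral>x. measure_pmf.prob (f x) E \<partial>M)"
proof -
  have "measure_pmf.prob (bind_pmf M f) E = pmf (map_pmf (\<lambda>x. x\<in>E) (bind_pmf M f)) True"
    by (simp add: pmf_map vimage_def)
  also have "\<dots> = pmf (bind_pmf M (\<lambda>x. map_pmf (\<lambda>x. x\<in>E) (f x))) True"
    by (simp add: map_bind_pmf)
  also have "\<dots> = (\<integral>x. measure_pmf.prob (f x) E \<partial>M)"
    by (simp add: pmf_bind pmf_map vimage_def)
  finally show ?thesis .
qed


lemma cluster_local:
  assumes "{e\<in>X1. fst e \<in> C} = {e\<in>X2. fst e \<in> C}" "C' \<subseteq> C"
  shows "is_cluster V r X1 C' = is_cluster V r X2 C'"
proof -
  have "\<And>e. fst e \<in> C' \<Longrightarrow> (e \<in> X1) = (e \<in> X2)" using assms by blast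
  then show ?thesis unfolding is_cluster_def by blast
qed

lemma minimal_local:
  assumes "{e\<in>X1. fst e \<in> C} = {e\<in>X2. fst e \<in> C}"
  shows "is_minimal_cluster V r X1 C = is_minimal_cluster V r X2 C"
proof -
  have h: "\<And>C'. C' \<subseteq> C \<Longrightarrow> is_cluster V r X1 C' = is_cluster V r X2 C'"
    using cluster_local[OF assms] by blast
  have "is_cluster V r X1 C = is_cluster V r X2 C" using h by simp
  moreover have "(\<exists>C'. is_cluster V r X1 C' \<and> C' \<subset> C) = (\<exists>C'. is_cluster V r X2 C' \<and> C' \<subset> C)"
    using h by (meson psubset_imp_subset)
  ultimately show ?thesis unfolding is_minimal_cluster_def by simp
qed

lemma minimal_disjoint:
  assumes "is_minimal_cluster V r X C" "is_minimal_cluster V r X D" "C \<noteq> D"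
  shows "C \<inter> D = {}"
proof (rule ccontr)
  assume ne: "C \<inter> D \<noteq> {}"
  have cC: "is_cluster V r X C" and cD: "is_cluster V r X D"
    using assms unfolding is_minimal_cluster_def by auto
  have cl: "is_cluster V r X (C \<inter> D)"
    using cC cD ne unfolding is_cluster_def by auto
  have "\<not> C \<inter> D \<subset> C" using assms(1) cl unfolding is_minimal_cluster_def by blast
  moreover have "\<not> C \<inter> D \<subset> D" using assms(2) cl unfolding is_minimal_cluster_def by blast
  ultimately show False using assms(3) by blast
qed

lemma exists_minimal:
  assumes "finite V" "is_cluster V r X C"
  shows "\<exists>C'. is_minimal_cluster V r X C'"
  using assms(2)
proof (induction "card C" arbitrary: C rule: less_induct)
  case less
  show ?case
  proof (cases "is_minimal_cluster V r X C")
    case True then show ?thesis by blast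
  next
    case False
    then obtain C' where c': "is_cluster V r X C'" "C' \<subset> C" using less.prems
      unfolding is_minimal_cluster_def by blast
    have "finite C" using less.prems assms(1) unfolding is_cluster_def by (meson finite_Diff finite_subset)
    then have "card C' < card C" using c' psubset_card_mono by blast
    then show ?thesis using less.hyps c' by blast
  qed
qed

lemma has_cluster_iff_minimal:
  assumes "finite V" shows "has_cluster V r X = (\<exists>C. is_minimal_cluster V r X C)"
proof
  assume "has_cluster V r X"
  then show "\<exists>C. is_minimal_cluster V r X C" unfolding has_cluster_def using exists_minimal[OF assms] by blast
next
  assume "\<exists>C. is_minimal_cluster V r X C"
  then show "has_cluster V r X" unfolding has_cluster_def is_minimal_cluster_def by blast
qed

lemma cluster_closed:
  assumes "is_cluster V r S C" "S \<subseteq> V \<times> V" "(v, w) \<in> S\<^sup>*" "v \<in> C"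
  shows "w \<in> C"
  using assms(3,4)
proof (induction rule: rtrancl_induct)
  case base then show ?case .
next
  case (step y z)
  have "z \<in> V" using step.hyps(2) assms(2) by blast
  show ?case
  proof (rule ccontr)
    assume "z \<notin> C"
    then have "fst (y,z) \<in> C \<and> snd (y,z) \<in> V - C" using step \<open>z \<in> V\<close> by simp
    then show False using assms(1) step.hyps(2) unfolding is_cluster_def by blast
  qed
qed

lemma has_cluster_iff:
  assumes "S \<subseteq> V \<times> V" "r \<in> V"
  shows "has_cluster V r S = (\<not> root_connected V r S)"
proof
  assume "has_cluster V r S"
  then obtain C where c: "is_cluster V r S C" unfolding has_cluster_def by blast
  then obtain v where "v \<in> C" unfolding is_cluster_def by blast
  moreover have "v \<in> V" "r \<notin> C" using c \<open>v\<in>C\<close> unfolding is_cluster_def by auto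
  ultimately show "\<not> root_connected V r S"
    unfolding root_connected_def using cluster_closed[OF c assms(1)] by blast
next
  assume "\<not> root_connected V r S"
  then obtain v where v: "v \<in> V" "(v, r) \<notin> S\<^sup>*" unfolding root_connected_def by blast
  let ?C = "{w\<in>V. (w, r) \<notin> S\<^sup>*}"
  have "is_cluster V r S ?C"
    unfolding is_cluster_def
  proof (intro conjI)
    show "?C \<noteq> {}" using v by blast
    show "?C \<subseteq> V - {r}" by auto
    show "\<not> (\<exists>e\<in>S. fst e \<in> ?C \<and> snd e \<in> V - ?C)"
    proof
      assume "\<exists>e\<in>S. fst e \<in> ?C \<and> snd e \<in> V - ?C"
      then obtain a b where ab: "(a,b) \<in> S" "a \<in> ?C" "b \<in> V - ?C" by auto
      then have "(b, r) \<in> S\<^sup>*" by simp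
      then have "(a, r) \<in> S\<^sup>*" using ab(1) by (rule converse_rtrancl_into_rtrancl[rotated])
      then show False using ab(2) by simp
    qed
  qed
  then show "has_cluster V r S" unfolding has_cluster_def by blast
qed



locale cp =
  fixes V :: "'v set" and r :: 'v and A :: "('v \<times> 'v) set"
  assumes finV: "finite V" and AV: "A \<subseteq> V \<times> V" and rV: "r \<in> V"
    and rcA: "root_connected V r A"
begin

lemma finA: "finite A"
  using finV AV finite_subset by blast

definition TT :: "'v set \<Rightarrow> ('v \<times> 'v) set" where "TT C = {e\<in>A. fst e \<in> C}"

lemma TT_sub: "TT C \<subseteq> A" unfolding TT_def by auto

lemma finTT: "finite (TT C)" using finA TT_sub finite_subset by blast

lemma finPowTT: "finite (Pow (TT C))" using finTT by simp

lemma PowTT_ne: "Pow (TT C) \<noteq> {}" by auto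

definition cmin :: "('v \<times> 'v) set \<Rightarrow> 'v set" where
  "cmin X = (SOME C. is_minimal_cluster V r X C)"

lemma cmin: "has_cluster V r X \<Longrightarrow> is_minimal_cluster V r X (cmin X)"
  unfolding cmin_def using has_cluster_iff_minimal[OF finV, of r X] by (simp add: someI_ex)

lemma hc_of_min: "is_minimal_cluster V r X C \<Longrightarrow> has_cluster V r X"
  unfolding has_cluster_def is_minimal_cluster_def by blast

lemma persist:
  assumes "is_minimal_cluster V r X C" "C \<inter> D = {}" "R \<subseteq> TT D"
  shows "is_minimal_cluster V r (X - TT D \<union> R) C"
proof -
  have "{e \<in> X - TT D \<union> R. fst e \<in> C} = {e\<in>X. fst e \<in> C}"
    using assms(2,3) unfolding TT_def by blast
  then show ?thesis using minimal_local[of "X - TT D \<union> R" C X] assms(1) by simp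
qed

lemma TT_disj: "C \<inter> D = {} \<Longrightarrow> TT C \<inter> TT D = {}"
  unfolding TT_def by blast

lemma pop_comm:
  assumes "C \<inter> D = {}" "R \<subseteq> TT C" "R' \<subseteq> TT D"
  shows "(X - TT C \<union> R) - TT D \<union> R' = (X - TT D \<union> R') - TT C \<union> R"
proof -
  have d: "TT C \<inter> TT D = {}" using TT_disj[OF assms(1)] .
  have "R \<inter> TT D = {}" "R' \<inter> TT C = {}" using d assms(2,3) by blast+
  then show ?thesis by blast
qed

fun Q :: "('v \<times> 'v) set \<Rightarrow> nat \<Rightarrow> ('v \<times> 'v) set \<Rightarrow> real" where
  "Q S 0 X = (if X = S then 1 else 0)"
| "Q S (Suc k) X = (if has_cluster V r X then
      (\<Sum>R\<in>Pow (TT (cmin X)). Q S k (X - TT (cmin X) \<union> R)) / real (card (Pow (TT (cmin X))))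
    else (if X = S then 1 else 0))"

lemma Q_nc: "\<not> has_cluster V r X \<Longrightarrow> Q S k X = (if X = S then 1 else 0)"
  by (cases k) auto

lemma Q_hc: "has_cluster V r X \<Longrightarrow> Q S (Suc k) X =
      (\<Sum>R\<in>Pow (TT (cmin X)). Q S k (X - TT (cmin X) \<union> R)) / real (card (Pow (TT (cmin X))))"
  by simp

declare Q.simps(2)[simp del]

lemma QL:
  assumes S: "\<not> has_cluster V r S"
  shows "is_minimal_cluster V r X C \<Longrightarrow>
    Q S (Suc k) X = (\<Sum>R\<in>Pow (TT C). Q S k (X - TT C \<union> R)) / real (card (Pow (TT C)))"
proof (induction k arbitrary: X C)
  case 0
  have hX: "has_cluster V r X" using hc_of_min[OF "0.prems"] .
  define C0 where "C0 = cmin X"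
  have m0: "is_minimal_cluster V r X C0" using cmin[OF hX] C0_def by simp
  show ?case
  proof (cases "C = C0")
    case True then show ?thesis using hX C0_def by (simp only: Q_hc)
  next
    case False
    have dj: "C \<inter> C0 = {}" using minimal_disjoint[OF "0.prems" m0 False] .
    have l: "Q S 0 (X - TT C0 \<union> R0) = 0" if "R0 \<in> Pow (TT C0)" for R0
    proof -
      have "has_cluster V r (X - TT C0 \<union> R0)"
        using hc_of_min[OF persist[OF "0.prems" dj]] that by blast
      then show ?thesis using S by auto
    qed
    have rr: "Q S 0 (X - TT C \<union> R) = 0" if "R \<in> Pow (TT C)" for R
    proof -
      have "C0 \<inter> C = {}" using dj by blast
      then have "has_cluster V r (X - TT C \<union> R)"
        using hc_of_min[OF persist[OF m0]] that by blast
      then show ?thesis using S by auto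
    qed
    show ?thesis using l rr C0_def by (simp add: Q_hc[OF hX])
  qed
next
  case (Suc k)
  have hX: "has_cluster V r X" using hc_of_min[OF Suc.prems] .
  define C0 where "C0 = cmin X"
  have m0: "is_minimal_cluster V r X C0" using cmin[OF hX] C0_def by simp
  show ?case
  proof (cases "C = C0")
    case True then show ?thesis using hX C0_def by (simp only: Q_hc)
  next
    case False
    have dj: "C \<inter> C0 = {}" using minimal_disjoint[OF Suc.prems m0 False] .
    have dj': "C0 \<inter> C = {}" using dj by blast
    define N where "N = real (card (Pow (TT C)))"
    define N0 where "N0 = real (card (Pow (TT C0)))"
    define f where "f = (\<lambda>R0 R. Q S k ((X - TT C0 \<union> R0) - TT C \<union> R))"
    have "Q S (Suc (Suc k)) X = (\<Sum>R0\<in>Pow (TT C0). Q S (Suc k) (X - TT C0 \<union> R0)) / N0"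
      using hX C0_def N0_def by (simp only: Q_hc)
    also have "\<dots> = (\<Sum>R0\<in>Pow (TT C0). (\<Sum>R\<in>Pow (TT C). f R0 R) / N) / N0"
    proof -
      have eq: "Q S (Suc k) (X - TT C0 \<union> R0) = (\<Sum>R\<in>Pow (TT C). f R0 R) / N" if "R0 \<in> Pow (TT C0)" for R0
        using Suc.IH[OF persist[OF Suc.prems dj]] that unfolding f_def N_def by blast
      show ?thesis by (rule arg_cong[where f="\<lambda>x. x / N0"], rule sum.cong[OF refl], erule eq)
    qed
    also have "\<dots> = (\<Sum>R0\<in>Pow (TT C0). \<Sum>R\<in>Pow (TT C). f R0 R) / (N * N0)"
      by (simp add: sum_divide_distrib)
    also have "\<dots> = (\<Sum>R\<in>Pow (TT C). \<Sum>R0\<in>Pow (TT C0). f R0 R) / (N * N0)"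
      by (rule arg_cong[where f="\<lambda>x. x/(N*N0)"], rule sum.swap)
    also have "\<dots> = (\<Sum>R\<in>Pow (TT C). (\<Sum>R0\<in>Pow (TT C0). f R0 R) / N0) / N"
      by (simp add: sum_divide_distrib mult.commute)
    also have "\<dots> = (\<Sum>R\<in>Pow (TT C). Q S (Suc k) (X - TT C \<union> R)) / N"
    proof -
      have eq2: "Q S (Suc k) (X - TT C \<union> R) = (\<Sum>R0\<in>Pow (TT C0). f R0 R) / N0" if "R \<in> Pow (TT C)" for R
      proof -
        have "Q S (Suc k) (X - TT C \<union> R) = (\<Sum>R0\<in>Pow (TT C0). Q S k ((X - TT C \<union> R) - TT C0 \<union> R0)) / N0"
          using Suc.IH[OF persist[OF m0 dj']] that unfolding N0_def by blast
        also have "\<dots> = (\<Sum>R0\<in>Pow (TT C0). f R0 R) / N0"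
          unfolding f_def
        proof (rule arg_cong[where f="\<lambda>x. x / N0"], rule sum.cong[OF refl])
          fix R0 assume "R0 \<in> Pow (TT C0)"
          then have "(X - TT C \<union> R) - TT C0 \<union> R0 = (X - TT C0 \<union> R0) - TT C \<union> R"
            using pop_comm[OF dj, of R R0 X] that by blast
          then show "Q S k ((X - TT C \<union> R) - TT C0 \<union> R0) = Q S k ((X - TT C0 \<union> R0) - TT C \<union> R)"
            by (rule arg_cong)
        qed
        finally show ?thesis .
      qed
      show ?thesis by (rule arg_cong[where f="\<lambda>x. x / N"], rule sum.cong[OF refl], erule eq2[symmetric])
    qed
    finally show ?thesis unfolding N_def by simp
  qed
qed

end


context cp
begin

fun iter :: "(('v \<times> 'v) set list \<Rightarrow> 'v set) \<Rightarrow> nat \<Rightarrow> ('v \<times> 'v) set list \<Rightarrow> ('v \<times> 'v) set list pmf" where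
  "iter sel 0 h = return_pmf h"
| "iter sel (Suc k) h = bind_pmf (iter sel k h) (pop_step V r A sel)"

lemma iter_Suc': "iter sel (Suc k) h = bind_pmf (pop_step V r A sel h) (iter sel k)"
proof (induction k arbitrary: h)
  case 0
  then show ?case by (simp add: bind_return_pmf bind_return_pmf')
next
  case (Suc k)
  have "iter sel (Suc (Suc k)) h = bind_pmf (iter sel (Suc k) h) (pop_step V r A sel)" by simp
  also have "\<dots> = bind_pmf (bind_pmf (pop_step V r A sel h) (iter sel k)) (pop_step V r A sel)"
    by (simp only: Suc.IH)
  also have "\<dots> = bind_pmf (pop_step V r A sel h) (\<lambda>x. bind_pmf (iter sel k x) (pop_step V r A sel))"
    by (rule bind_assoc_pmf)
  also have "\<dots> = bind_pmf (pop_step V r A sel h) (iter sel (Suc k))"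
    by (rule arg_cong[where f="bind_pmf (pop_step V r A sel h)"]) (rule ext, simp)
  finally show ?case .
qed

lemma pop_run_iter: "pop_run V r A sel n = bind_pmf (random_subset A) (\<lambda>S. iter sel n [S])"
proof (induction n)
  case 0
  then show ?case by (simp add: map_pmf_def)
next
  case (Suc n)
  then show ?case by (simp add: bind_assoc_pmf)
qed

lemma run_add: "pop_run V r A sel (n + k) = bind_pmf (pop_run V r A sel n) (iter sel k)"
proof (induction k)
  case 0
  then show ?case by (simp add: bind_return_pmf')
next
  case (Suc k)
  then show ?case by (simp add: bind_assoc_pmf)
qed

lemma finPowA: "finite (Pow A)" using finA by simp

lemma TT_eq: "{e \<in> A. fst e \<in> C} = TT C" unfolding TT_def ..

lemma set_PowTT: "set_pmf (pmf_of_set (Pow (TT C))) = Pow (TT C)"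
  by (rule set_pmf_of_set[OF PowTT_ne finPowTT])

lemma set_PowA: "set_pmf (pmf_of_set (Pow A)) = Pow A"
  by (rule set_pmf_of_set) (auto simp: finA)

lemma step_hc: "has_cluster V r (hd h) \<Longrightarrow>
  pop_step V r A sel h = map_pmf (\<lambda>R. (hd h - TT (sel h) \<union> R) # h) (pmf_of_set (Pow (TT (sel h))))"
  unfolding pop_step_def random_subset_def by (simp add: Let_def TT_eq)

lemma step_nc: "\<not> has_cluster V r (hd h) \<Longrightarrow> pop_step V r A sel h = return_pmf h"
  unfolding pop_step_def by simp

lemma step_set: assumes "hd h \<subseteq> A" "h' \<in> set_pmf (pop_step V r A sel h)" shows "hd h' \<subseteq> A"
proof (cases "has_cluster V r (hd h)")
  case True
  then obtain R where R: "R \<subseteq> TT (sel h)" "h' = (hd h - TT (sel h) \<union> R) # h"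
    using assms(2) by (auto simp: step_hc set_PowTT)
  then show ?thesis using assms(1) TT_sub[of "sel h"] by auto
next
  case False then show ?thesis using assms by (simp add: step_nc)
qed

lemma run_set: "h \<in> set_pmf (pop_run V r A sel n) \<Longrightarrow> hd h \<subseteq> A"
proof (induction n arbitrary: h)
  case 0
  then show ?case by (auto simp: random_subset_def set_PowA)
next
  case (Suc n)
  from Suc.prems obtain x where x: "x \<in> set_pmf (pop_run V r A sel n)" "h \<in> set_pmf (pop_step V r A sel x)" by auto
  then show ?case using Suc.IH[OF x(1)] step_set by blast
qed

lemma iter_set: "hd h \<subseteq> A \<Longrightarrow> h' \<in> set_pmf (iter sel k h) \<Longrightarrow> hd h' \<subseteq> A"
proof (induction k arbitrary: h')
  case 0
  then show ?case by simp
next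
  case (Suc k)
  from Suc.prems(2) obtain x where x: "x \<in> set_pmf (iter sel k h)" "h' \<in> set_pmf (pop_step V r A sel x)" by auto
  then show ?case using Suc.IH[OF Suc.prems(1) x(1)] step_set by blast
qed

lemma iter_stop: "\<not> has_cluster V r (hd h) \<Longrightarrow> iter sel k h = return_pmf h"
  by (induction k) (simp_all add: bind_return_pmf step_nc)

lemma QA:
  assumes valid: "\<And>h. has_cluster V r (hd h) \<Longrightarrow> is_minimal_cluster V r (hd h) (sel h)"
    and S: "\<not> has_cluster V r S"
  shows "hd h \<subseteq> A \<Longrightarrow> pmf (map_pmf hd (iter sel k h)) S = Q S k (hd h)"
proof (induction k arbitrary: h)
  case 0
  then show ?case by (simp add: indicator_def)
next
  case (Suc k)
  define X where "X = hd h"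
  show ?case
  proof (cases "has_cluster V r X")
    case True
    define T where "T = TT (sel h)"
    have m: "is_minimal_cluster V r X (sel h)" using valid True X_def by blast
    have st: "pop_step V r A sel h = map_pmf (\<lambda>R. (X - T \<union> R) # h) (pmf_of_set (Pow T))"
      using step_hc[of h sel] True X_def T_def by simp
    have "pmf (map_pmf hd (iter sel (Suc k) h)) S
        = pmf (bind_pmf (pmf_of_set (Pow T)) (\<lambda>R. map_pmf hd (iter sel k ((X - T \<union> R) # h)))) S"
      unfolding iter_Suc' st bind_map_pmf map_bind_pmf by simp
    also have "\<dots> = (\<Sum>R\<in>Pow T. pmf (map_pmf hd (iter sel k ((X - T \<union> R) # h))) S) / real (card (Pow T))"
      unfolding pmf_bind T_def using integral_pmf_of_set[OF PowTT_ne finPowTT] by simp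
    also have "\<dots> = (\<Sum>R\<in>Pow T. Q S k (X - T \<union> R)) / real (card (Pow T))"
    proof (rule arg_cong[where f="\<lambda>x. x / real (card (Pow T))"], rule sum.cong[OF refl])
      fix R assume "R \<in> Pow T"
      then have "hd ((X - T \<union> R) # h) \<subseteq> A" using TT_sub[of "sel h"] Suc.prems X_def T_def by auto
      then show "pmf (map_pmf hd (iter sel k ((X - T \<union> R) # h))) S = Q S k (X - T \<union> R)"
        using Suc.IH by simp
    qed
    also have "\<dots> = Q S (Suc k) X" using QL[OF S m, of k] T_def by simp
    finally show ?thesis using X_def by simp
  next
    case False
    have "iter sel (Suc k) h = iter sel k h"
      unfolding iter_Suc' step_nc[OF False[unfolded X_def]] bind_return_pmf ..
    then show ?thesis using Suc.IH[OF Suc.prems] Q_nc[OF False] X_def by simp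
  qed
qed

lemma QB:
  assumes valid: "\<And>h. has_cluster V r (hd h) \<Longrightarrow> is_minimal_cluster V r (hd h) (sel h)"
    and S: "\<not> has_cluster V r S"
  shows "pmf (map_pmf hd (pop_run V r A sel n)) S = (\<Sum>X\<in>Pow A. Q S n X) / real (card (Pow A))"
proof -
  have "pmf (map_pmf hd (pop_run V r A sel n)) S
     = pmf (bind_pmf (pmf_of_set (Pow A)) (\<lambda>X. map_pmf hd (iter sel n [X]))) S"
    unfolding pop_run_iter map_bind_pmf random_subset_def ..
  also have "\<dots> = (\<Sum>X\<in>Pow A. pmf (map_pmf hd (iter sel n [X])) S) / real (card (Pow A))"
  proof -
    have ne: "Pow A \<noteq> {}" by blast
    show ?thesis unfolding pmf_bind using integral_pmf_of_set[OF ne finPowA] by simp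
  qed
  also have "\<dots> = (\<Sum>X\<in>Pow A. Q S n X) / real (card (Pow A))"
    using QA[OF valid S] by (intro arg_cong[where f="\<lambda>x. x / real (card (Pow A))"] sum.cong) auto
  finally show ?thesis .
qed

end


context cp
begin

definition sel0 :: "('v \<times> 'v) set list \<Rightarrow> 'v set" where "sel0 h = cmin (hd h)"

lemma sel0_valid: "has_cluster V r (hd h) \<Longrightarrow> is_minimal_cluster V r (hd h) (sel0 h)"
  unfolding sel0_def using cmin by blast

definition mu :: "nat \<Rightarrow> ('v \<times> 'v) set pmf" where
  "mu n = map_pmf hd (pop_run V r A sel0 n)"

definition cstep :: "('v \<times> 'v) set \<Rightarrow> ('v \<times> 'v) set pmf" where
  "cstep X = (if has_cluster V r X then
      map_pmf (\<lambda>R. X - TT (cmin X) \<union> R) (pmf_of_set (Pow (TT (cmin X)))) else return_pmf X)"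

lemma mu_0: "mu 0 = pmf_of_set (Pow A)"
  unfolding mu_def by (simp add: map_pmf_comp random_subset_def)

lemma step_cstep: "map_pmf hd (pop_step V r A sel0 h) = cstep (hd h)"
  by (cases "has_cluster V r (hd h)") (simp_all add: step_hc step_nc cstep_def map_pmf_comp sel0_def)

lemma mu_Suc: "mu (Suc n) = bind_pmf (mu n) cstep"
  unfolding mu_def by (simp add: map_bind_pmf bind_map_pmf step_cstep)

lemma mu_set: "X \<in> set_pmf (mu n) \<Longrightarrow> X \<subseteq> A"
  unfolding mu_def using run_set by auto

lemma pmf_cstep_hc:
  assumes "has_cluster V r X"
  shows "pmf (cstep X) Y = (if X - TT (cmin X) = Y - TT (cmin X) then 1 else 0) / real (card (Pow (TT (cmin X))))"
proof -
  define T where "T = TT (cmin X)"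
  have e: "Pow T \<inter> (\<lambda>R. X - T \<union> R) -` {Y} = (if X - T = Y - T then {Y \<inter> T} else {})"
    by auto
  have m: "measure_pmf.prob (pmf_of_set (Pow T)) E = card (Pow T \<inter> E) / card (Pow T)" for E
    unfolding T_def by (rule measure_pmf_of_set[OF PowTT_ne finPowTT])
  have "pmf (cstep X) Y = measure_pmf.prob (pmf_of_set (Pow T)) ((\<lambda>R. X - T \<union> R) -` {Y})"
    using assms unfolding cstep_def T_def by (simp add: pmf_map)
  also have "\<dots> = card (Pow T \<inter> (\<lambda>R. X - T \<union> R) -` {Y}) / card (Pow T)" by (rule m)
  also have "\<dots> = (if X - T = Y - T then 1 else 0) / real (card (Pow T))" unfolding e by simp
  finally show ?thesis unfolding T_def .
qed

lemma pmf_cstep_nc: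
  "\<not> has_cluster V r X \<Longrightarrow> pmf (cstep X) Y = (if X = Y then 1 else 0)"
  unfolding cstep_def by simp

lemma mu_Suc_sum: "pmf (mu (Suc n)) Y = (\<Sum>X\<in>Pow A. pmf (cstep X) Y * pmf (mu n) X)"
  unfolding mu_Suc pmf_bind
  by (rule integral_measure_pmf_real) (auto simp: finA dest: mu_set)

end


context cp
begin

lemma cmin_cong: assumes "\<And>D. is_minimal_cluster V r X D = is_minimal_cluster V r X2 D"
  shows "cmin X = cmin X2"
proof -
  have "is_minimal_cluster V r X = is_minimal_cluster V r X2" by (intro ext) (rule assms)
  then show ?thesis by (simp add: cmin_def)
qed

lemma hc_cong: assumes "\<And>D. is_minimal_cluster V r X D = is_minimal_cluster V r X2 D"
  shows "has_cluster V r X = has_cluster V r X2"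
  using has_cluster_iff_minimal[OF finV] assms by simp

lemma KL:
  assumes YA: "Y \<subseteq> A" and Y'A: "Y' \<subseteq> A" and BA: "B \<subseteq> A" and YB: "Y - B = Y' - B"
    and hB: "\<forall>e\<in>B. \<forall>D. is_minimal_cluster V r Y D \<longrightarrow> fst e \<notin> D"
    and hY: "\<forall>D. is_minimal_cluster V r Y D = is_minimal_cluster V r Y' D"
    and XA: "X \<subseteq> A" and hX: "has_cluster V r X" and XY: "X - TT (cmin X) = Y - TT (cmin X)"
  defines "T \<equiv> TT (cmin X)"
  defines "X2 \<equiv> (Y' - T) \<union> (X \<inter> T)"
  shows "(\<forall>D. is_minimal_cluster V r X D = is_minimal_cluster V r X2 D) \<and> X2 \<subseteq> A
     \<and> X - (B - T) = X2 - (B - T) \<and> (\<forall>e\<in>B - T. \<forall>D. is_minimal_cluster V r X D \<longrightarrow> fst e \<notin> D)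
     \<and> X2 - T = Y' - T"
proof -
  define C where "C = cmin X"
  have mC: "is_minimal_cluster V r X C" using cmin[OF hX] C_def by simp
  have TC: "T = {e\<in>A. fst e \<in> C}" unfolding T_def C_def TT_def ..
  have locC: "{e\<in>X2. fst e \<in> C} = {e\<in>X. fst e \<in> C}"
    using XA Y'A unfolding X2_def TC by blast
  have mC2: "is_minimal_cluster V r X2 C" using mC minimal_local[OF locC] by simp
  have locXY: "{e\<in>X. fst e \<in> D} = {e\<in>Y. fst e \<in> D}" if "C \<inter> D = {}" for D
    using XY that unfolding T_def[symmetric] TC by blast
  have locX2Y': "{e\<in>X2. fst e \<in> D} = {e\<in>Y'. fst e \<in> D}" if "C \<inter> D = {}" for D
    using that unfolding X2_def TC by blast
  have locYY': "{e\<in>Y. fst e \<in> D} = {e\<in>Y'. fst e \<in> D}" if "is_minimal_cluster V r Y D" for D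
    using that hB YB by blast
  have m1: "is_minimal_cluster V r X2 D" if "is_minimal_cluster V r X D" for D
  proof (cases "D = C")
    case True then show ?thesis using mC2 by simp
  next
    case False
    have dj: "C \<inter> D = {}" using minimal_disjoint[OF mC that] False by blast
    have "is_minimal_cluster V r Y D" using that minimal_local[OF locXY[OF dj]] by simp
    then have "is_minimal_cluster V r Y' D" using hY by simp
    then show ?thesis using minimal_local[OF locX2Y'[OF dj]] by simp
  qed
  have m2: "is_minimal_cluster V r X D" if "is_minimal_cluster V r X2 D" for D
  proof (cases "D = C")
    case True then show ?thesis using mC by simp
  next
    case False
    have dj: "C \<inter> D = {}" using minimal_disjoint[OF mC2 that] False by blast
    have "is_minimal_cluster V r Y' D" using that minimal_local[OF locX2Y'[OF dj]] by simp
    then have mY: "is_minimal_cluster V r Y D" using hY by simp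
    then have "is_minimal_cluster V r Y D" by simp
    then show ?thesis using minimal_local[OF locXY[OF dj]] by simp
  qed
  have p1: "\<forall>D. is_minimal_cluster V r X D = is_minimal_cluster V r X2 D" using m1 m2 by blast
  have p2: "X2 \<subseteq> A" using XA Y'A unfolding X2_def by blast
  have p3: "X - (B - T) = X2 - (B - T)"
    using XY YB XA unfolding X2_def T_def[symmetric] by blast
  have p4: "\<forall>e\<in>B - T. \<forall>D. is_minimal_cluster V r X D \<longrightarrow> fst e \<notin> D"
  proof (intro ballI allI impI)
    fix e D assume e: "e \<in> B - T" and mD: "is_minimal_cluster V r X D"
    show "fst e \<notin> D"
    proof (cases "D = C")
      case True then show ?thesis using e BA unfolding TC by blast
    next
      case False
      have dj: "C \<inter> D = {}" using minimal_disjoint[OF mC mD] False by blast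
      have "is_minimal_cluster V r Y D" using mD minimal_local[OF locXY[OF dj]] by simp
      then show ?thesis using hB e by blast
    qed
  qed
  have p5: "X2 - T = Y' - T" unfolding X2_def by blast
  show ?thesis using p1 p2 p3 p4 p5 by blast
qed

end


context cp
begin

definition GG :: "('v \<times> 'v) set \<Rightarrow> ('v \<times> 'v) set set" where
  "GG Z = {X \<in> Pow A. has_cluster V r X \<and> X - TT (cmin X) = Z - TT (cmin X)}"

definition ww :: "nat \<Rightarrow> ('v \<times> 'v) set \<Rightarrow> real" where
  "ww n X = pmf (mu n) X / real (card (Pow (TT (cmin X))))"

definition phi :: "('v \<times> 'v) set \<Rightarrow> ('v \<times> 'v) set \<Rightarrow> ('v \<times> 'v) set" where
  "phi Z X = (Z - TT (cmin X)) \<union> (X \<inter> TT (cmin X))"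

lemma mu_formula:
  assumes "Z \<subseteq> A"
  shows "pmf (mu (Suc n)) Z = sum (ww n) (GG Z) + (if has_cluster V r Z then 0 else pmf (mu n) Z)"
proof -
  have t: "pmf (cstep X) Z * pmf (mu n) X =
      (if has_cluster V r X \<and> X - TT (cmin X) = Z - TT (cmin X) then ww n X else 0)
      + (if X = Z then (if has_cluster V r Z then 0 else pmf (mu n) Z) else 0)" for X
    by (cases "has_cluster V r X") (auto simp: pmf_cstep_hc pmf_cstep_nc ww_def)
  have "pmf (mu (Suc n)) Z = (\<Sum>X\<in>Pow A. pmf (cstep X) Z * pmf (mu n) X)" by (rule mu_Suc_sum)
  also have "\<dots> = (\<Sum>X\<in>Pow A. (if has_cluster V r X \<and> X - TT (cmin X) = Z - TT (cmin X) then ww n X else 0))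
      + (\<Sum>X\<in>Pow A. (if X = Z then (if has_cluster V r Z then 0 else pmf (mu n) Z) else 0))"
    unfolding t by (rule sum.distrib)
  also have "\<dots> = sum (ww n) (GG Z) + (if has_cluster V r Z then 0 else pmf (mu n) Z)"
  proof -
    have a: "(\<Sum>X\<in>Pow A. (if has_cluster V r X \<and> X - TT (cmin X) = Z - TT (cmin X) then ww n X else 0))
        = sum (ww n) (GG Z)"
      unfolding GG_def by (rule sum.inter_filter[OF finPowA, symmetric])
    have b: "(\<Sum>X\<in>Pow A. (if X = Z then (if has_cluster V r Z then 0 else pmf (mu n) Z) else 0))
        = (if has_cluster V r Z then 0 else pmf (mu n) Z)"
      using assms finPowA by simp
    show ?thesis using a b by simp
  qed
  finally show ?thesis .
qed

lemma mu_sym: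
  "Y \<subseteq> A \<Longrightarrow> Y' \<subseteq> A \<Longrightarrow> B \<subseteq> A \<Longrightarrow> Y - B = Y' - B
   \<Longrightarrow> (\<forall>e\<in>B. \<forall>D. is_minimal_cluster V r Y D \<longrightarrow> fst e \<notin> D)
   \<Longrightarrow> (\<forall>D. is_minimal_cluster V r Y D = is_minimal_cluster V r Y' D)
   \<Longrightarrow> pmf (mu n) Y = pmf (mu n) Y'"
proof (induction n arbitrary: Y Y' B)
  case 0
  have ne: "Pow A \<noteq> {}" by blast
  show ?case using 0 by (simp add: mu_0 pmf_of_set[OF ne finPowA])
next
  case (Suc n)
  have key: "phi Z' X \<in> GG Z' \<and> phi Z (phi Z' X) = X \<and> ww n (phi Z' X) = ww n X"
    if Z: "Z \<subseteq> A" "Z' \<subseteq> A" "Z - B = Z' - B"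
      "\<forall>e\<in>B. \<forall>D. is_minimal_cluster V r Z D \<longrightarrow> fst e \<notin> D"
      "\<forall>D. is_minimal_cluster V r Z D = is_minimal_cluster V r Z' D"
      and X: "X \<in> GG Z" for Z Z' X
  proof -
    have XA: "X \<subseteq> A" and hX: "has_cluster V r X" and XZ: "X - TT (cmin X) = Z - TT (cmin X)"
      using X unfolding GG_def by auto
    define T where "T = TT (cmin X)"
    define X2 where "X2 = phi Z' X"
    have X2d: "X2 = (Z' - T) \<union> (X \<inter> T)" unfolding X2_def phi_def T_def ..
    have kl: "(\<forall>D. is_minimal_cluster V r X D = is_minimal_cluster V r X2 D) \<and> X2 \<subseteq> A
     \<and> X - (B - T) = X2 - (B - T) \<and> (\<forall>e\<in>B - T. \<forall>D. is_minimal_cluster V r X D \<longrightarrow> fst e \<notin> D)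
     \<and> X2 - T = Z' - T"
      unfolding X2d T_def by (rule KL[OF Z(1,2) Suc.prems(3) Z(3,4,5) XA hX XZ])
    have k1': "\<forall>D. is_minimal_cluster V r X D = is_minimal_cluster V r X2 D" using kl by (rule conjunct1)
    have k2: "X2 \<subseteq> A" using kl[THEN conjunct2] by (rule conjunct1)
    have k3: "X - (B - T) = X2 - (B - T)" using kl[THEN conjunct2, THEN conjunct2] by (rule conjunct1)
    have k4: "\<forall>e\<in>B - T. \<forall>D. is_minimal_cluster V r X D \<longrightarrow> fst e \<notin> D"
      using kl[THEN conjunct2, THEN conjunct2, THEN conjunct2] by (rule conjunct1)
    have k5: "X2 - T = Z' - T" using kl[THEN conjunct2, THEN conjunct2, THEN conjunct2] by (rule conjunct2)
    have k1: "\<And>D. is_minimal_cluster V r X D = is_minimal_cluster V r X2 D" by (rule spec[OF k1'])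
    have cm: "cmin X2 = cmin X" using cmin_cong[OF k1] by simp
    have hX2: "has_cluster V r X2" using hc_cong[OF k1] hX by simp
    have g: "X2 \<in> GG Z'" using k2 k5 cm hX2 unfolding GG_def T_def by auto
    have inv: "phi Z X2 = X" unfolding phi_def cm using XZ X2d T_def by blast
    have BT: "B - T \<subseteq> A" using Suc.prems(3) by blast
    have "pmf (mu n) X = pmf (mu n) X2" using Suc.IH[OF XA k2 BT k3 k4 k1'] .
    then have "ww n X2 = ww n X" unfolding ww_def cm by simp
    then show ?thesis using g inv X2_def by simp
  qed
  have hB': "\<forall>e\<in>B. \<forall>D. is_minimal_cluster V r Y' D \<longrightarrow> fst e \<notin> D" using Suc.prems(5,6) by blast
  have hY': "\<forall>D. is_minimal_cluster V r Y' D = is_minimal_cluster V r Y D" using Suc.prems(6) by blast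
  have YB': "Y' - B = Y - B" using Suc.prems(4) by simp
  have k1: "phi Y' X \<in> GG Y' \<and> phi Y (phi Y' X) = X \<and> ww n (phi Y' X) = ww n X" if "X \<in> GG Y" for X
    using key[OF Suc.prems(1,2,4,5,6) that] .
  have k2: "phi Y X \<in> GG Y \<and> phi Y' (phi Y X) = X \<and> ww n (phi Y X) = ww n X" if "X \<in> GG Y'" for X
    using key[OF Suc.prems(2,1) YB' hB' hY' that] .
  have s: "sum (ww n) (GG Y) = sum (ww n) (GG Y')"
    by (rule sum.reindex_bij_witness[where i="phi Y" and j="phi Y'"]) (use k1 k2 in auto)
  have hc: "has_cluster V r Y = has_cluster V r Y'" by (rule hc_cong) (use Suc.prems(6) in blast)
  have p: "pmf (mu n) Y = pmf (mu n) Y'" using Suc.IH[OF Suc.prems] .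
  show ?case using mu_formula[OF Suc.prems(1)] mu_formula[OF Suc.prems(2)] s hc p by simp
qed

end


context cp
begin

lemma not_all_arcs:
  assumes "is_cluster V r X C"
  shows "\<exists>e\<in>TT C. e \<notin> X"
proof (rule ccontr)
  assume "\<not> (\<exists>e\<in>TT C. e \<notin> X)"
  then have sub: "TT C \<subseteq> X" by blast
  have "is_cluster V r A C"
    unfolding is_cluster_def
  proof (intro conjI)
    show "C \<noteq> {}" "C \<subseteq> V - {r}" using assms unfolding is_cluster_def by auto
    show "\<not> (\<exists>e\<in>A. fst e \<in> C \<and> snd e \<in> V - C)"
    proof
      assume "\<exists>e\<in>A. fst e \<in> C \<and> snd e \<in> V - C"
      then obtain e where e: "e \<in> A" "fst e \<in> C" "snd e \<in> V - C" by blast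
      then have "e \<in> X" using sub unfolding TT_def by blast
      then show False using e assms unfolding is_cluster_def by blast
    qed
  qed
  then have "has_cluster V r A" unfolding has_cluster_def by blast
  then show False using has_cluster_iff[OF AV rV] rcA by blast
qed

abbreviation EE :: "('v \<times> 'v) set list set" where "EE \<equiv> {h. \<not> has_cluster V r (hd h)}"

lemma progress:
  assumes valid: "\<And>h. has_cluster V r (hd h) \<Longrightarrow> is_minimal_cluster V r (hd h) (sel h)"
  shows "hd h \<subseteq> A \<Longrightarrow> card (A - hd h) \<le> m \<Longrightarrow>
    measure_pmf.prob (iter sel m h) EE \<ge> (1 / 2 ^ card A) ^ m"
proof (induction m arbitrary: h)
  case 0
  have "A - hd h = {}" using 0 finA by simp
  then have "hd h = A" using "0.prems"(1) by blast
  then have nc: "\<not> has_cluster V r (hd h)" using has_cluster_iff[OF AV rV] rcA by simp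
  then show ?case by (simp add: iter_stop)
next
  case (Suc m)
  define q :: real where "q = 1 / 2 ^ card A"
  have q0: "0 \<le> q" "q \<le> 1" unfolding q_def by auto
  show ?case
  proof (cases "has_cluster V r (hd h)")
    case False
    then have "measure_pmf.prob (iter sel (Suc m) h) EE = 1" unfolding iter_stop[OF False] by simp
    moreover have "q ^ Suc m \<le> 1" using q0 by (rule power_le_one)
    ultimately show ?thesis unfolding q_def by simp
  next
    case True
    define X where "X = hd h"
    define T where "T = TT (sel h)"
    have m: "is_minimal_cluster V r X (sel h)" using valid True X_def by blast
    have cl: "is_cluster V r X (sel h)" using m unfolding is_minimal_cluster_def by (rule conjunct1)
    obtain e where e: "e \<in> T" "e \<notin> X" using not_all_arcs[OF cl] unfolding T_def by blast
    define f where "f R = measure_pmf.prob (iter sel m ((X - T \<union> R) # h)) EE" for R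
    have "measure_pmf.prob (iter sel (Suc m) h) EE
        = (\<integral>x. measure_pmf.prob (iter sel m x) EE \<partial>pop_step V r A sel h)"
      unfolding iter_Suc' by (rule prob_bind_pmf)
    also have "\<dots> = (\<integral>R. f R \<partial>pmf_of_set (Pow T))"
      unfolding step_hc[OF True] f_def X_def T_def by simp
    also have "\<dots> = (\<Sum>R\<in>Pow T. f R) / real (card (Pow T))"
      unfolding T_def by (rule integral_pmf_of_set[OF PowTT_ne finPowTT])
    finally have eq: "measure_pmf.prob (iter sel (Suc m) h) EE = (\<Sum>R\<in>Pow T. f R) / real (card (Pow T))" .
    have TA: "T \<subseteq> A" unfolding T_def by (rule TT_sub)
    have finT: "finite T" unfolding T_def by (rule finTT)
    have XA: "X \<subseteq> A" using Suc.prems X_def by simp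
    have "A - (X - T \<union> T) \<subseteq> (A - X) - {e}" using e by blast
    then have "card (A - (X - T \<union> T)) \<le> card ((A - X) - {e})"
      using finA by (intro card_mono) auto
    also have "\<dots> = card (A - X) - 1" proof -
      have "e \<in> A - X" using e TA by blast
      then show ?thesis by (rule card_Diff_singleton)
    qed
    also have "\<dots> \<le> m" using Suc.prems X_def by simp
    finally have cm: "card (A - hd ((X - T \<union> T) # h)) \<le> m" by simp
    have hA: "hd ((X - T \<union> T) # h) \<subseteq> A" using XA TA by auto
    have fT: "f T \<ge> q ^ m" using Suc.IH[OF hA cm] unfolding f_def q_def by simp
    have fnn: "\<And>R. 0 \<le> f R" unfolding f_def by simp
    have "f T \<le> (\<Sum>R\<in>Pow T. f R)" using finT fnn by (intro member_le_sum) auto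
    have cP: "real (card (Pow T)) \<le> 2 ^ card A"
    proof -
      have "card T \<le> card A" using TA finA by (rule card_mono[rotated])
      then have "(2::nat) ^ card T \<le> 2 ^ card A" by (rule power_increasing) simp
      then show ?thesis using finT by (simp add: card_Pow)
    qed
    have cP0: "0 < real (card (Pow T))" using finT by (simp add: card_Pow)
    have "q ^ Suc m = q ^ m / 2 ^ card A" unfolding q_def by simp
    also have "\<dots> \<le> q ^ m / real (card (Pow T))"
      using cP cP0 q0 by (intro divide_left_mono) auto
    also have "\<dots> \<le> (\<Sum>R\<in>Pow T. f R) / real (card (Pow T))"
      using fT \<open>f T \<le> (\<Sum>R\<in>Pow T. f R)\<close> cP0 by (intro divide_right_mono) auto
    finally show ?thesis using eq unfolding q_def by simp
  qed
qed

end


context cp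
begin

lemma term_limit:
  assumes valid: "\<And>h. has_cluster V r (hd h) \<Longrightarrow> is_minimal_cluster V r (hd h) (sel h)"
  shows "(\<lambda>n. measure_pmf.prob (pop_run V r A sel n) EE) \<longlonglongrightarrow> 1"
proof -
  define FF where "FF = {h. has_cluster V r (hd h)}"
  define b where "b n = measure_pmf.prob (pop_run V r A sel n) FF" for n
  define K where "K = Suc (card A)"
  define c :: real where "c = (1 / 2 ^ card A) ^ K"
  have c0: "0 < c" unfolding c_def by simp
  have c1: "c \<le> 1" unfolding c_def by (rule power_le_one) auto
  have compl: "measure_pmf.prob M FF = 1 - measure_pmf.prob M EE" for M
  proof -
    have "FF = space (measure_pmf M) - EE" unfolding FF_def by auto
    then show ?thesis using measure_pmf.prob_compl[of EE M] by simp
  qed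
  have bK: "b (n + K) \<le> (1 - c) * b n" for n
  proof -
    have "b (n + K) = (\<integral>h. measure_pmf.prob (iter sel K h) FF \<partial>pop_run V r A sel n)"
      unfolding b_def run_add by (rule prob_bind_pmf)
    also have "\<dots> \<le> (\<integral>h. (1 - c) * indicator FF h \<partial>pop_run V r A sel n)"
    proof (rule integral_mono_AE)
      show "integrable (measure_pmf (pop_run V r A sel n)) (\<lambda>h. measure_pmf.prob (iter sel K h) FF)"
        by (rule measure_pmf.integrable_const_bound[where B=1]) auto
      show "integrable (measure_pmf (pop_run V r A sel n)) (\<lambda>h. (1 - c) * indicator FF h)"
        using c0 c1 by (intro measure_pmf.integrable_const_bound[where B=1] AE_I2) (auto split: split_indicator)
      show "AE h in measure_pmf (pop_run V r A sel n). measure_pmf.prob (iter sel K h) FF \<le> (1 - c) * indicator FF h"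
      proof (rule AE_pmfI)
        fix h assume h: "h \<in> set_pmf (pop_run V r A sel n)"
        have hA: "hd h \<subseteq> A" using run_set[OF h] .
        show "measure_pmf.prob (iter sel K h) FF \<le> (1 - c) * indicator FF h"
        proof (cases "has_cluster V r (hd h)")
          case True
          have "card (A - hd h) \<le> card A" using finA by (intro card_mono) auto
          then have "card (A - hd h) \<le> K" unfolding K_def by simp
          then have "c \<le> measure_pmf.prob (iter sel K h) EE" using progress[OF valid hA] unfolding c_def by blast
          then show ?thesis using True compl unfolding FF_def by simp
        next
          case False
          then show ?thesis unfolding iter_stop[OF False] FF_def by simp
        qed
      qed
    qed
    also have "\<dots> = (1 - c) * b n" unfolding b_def by simp
    finally show ?thesis .
  qed
  have bS: "b (Suc n) \<le> b n" for n
  proof -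
    have "b (Suc n) = (\<integral>h. measure_pmf.prob (pop_step V r A sel h) FF \<partial>pop_run V r A sel n)"
      unfolding b_def pop_run.simps by (rule prob_bind_pmf)
    also have "\<dots> \<le> (\<integral>h. indicator FF h \<partial>pop_run V r A sel n)"
    proof (rule integral_mono_AE)
      show "integrable (measure_pmf (pop_run V r A sel n)) (\<lambda>h. measure_pmf.prob (pop_step V r A sel h) FF)"
        by (rule measure_pmf.integrable_const_bound[where B=1]) auto
      show "integrable (measure_pmf (pop_run V r A sel n)) (\<lambda>h. indicator FF h :: real)"
        by (intro measure_pmf.integrable_const_bound[where B=1] AE_I2) (auto split: split_indicator)
      show "AE h in measure_pmf (pop_run V r A sel n). measure_pmf.prob (pop_step V r A sel h) FF \<le> indicator FF h"
      proof (rule AE_pmfI)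
        fix h
        show "measure_pmf.prob (pop_step V r A sel h) FF \<le> indicator FF h"
        proof (cases "has_cluster V r (hd h)")
          case True then show ?thesis unfolding FF_def by simp
        next
          case False then show ?thesis unfolding step_nc[OF False] FF_def by simp
        qed
      qed
    qed
    also have "\<dots> = b n" unfolding b_def by simp
    finally show ?thesis .
  qed
  have dec: "decseq b" using bS by (rule decseq_SucI)
  have bj: "b (j * K) \<le> (1 - c) ^ j" for j
  proof (induction j)
    case 0
    then show ?case unfolding b_def by simp
  next
    case (Suc j)
    have "b (Suc j * K) = b (j * K + K)" by (simp add: add.commute)
    also have "\<dots> \<le> (1 - c) * b (j * K)" by (rule bK)
    also have "\<dots> \<le> (1 - c) * (1 - c) ^ j" using Suc c1 by (intro mult_left_mono) auto
    finally show ?case by simp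
  qed
  have bn: "b n \<le> (1 - c) ^ (n div K)" for n
  proof -
    have "n div K * K \<le> n" by (rule div_times_less_eq_dividend)
    then have "b n \<le> b (n div K * K)" using dec by (simp add: decseq_def)
    also have "\<dots> \<le> (1 - c) ^ (n div K)" by (rule bj)
    finally show ?thesis .
  qed
  have b0: "0 \<le> b n" for n unfolding b_def by simp
  have fl: "filterlim (\<lambda>n. n div K) sequentially sequentially"
    unfolding filterlim_at_top eventually_sequentially
  proof (intro allI exI[of _ "Z * K" for Z] impI)
    fix Z n :: nat assume "Z * K \<le> n"
    then have "Z * K div K \<le> n div K" by (rule div_le_mono)
    moreover have "Z * K div K = Z" unfolding K_def by (rule div_mult_self_is_m) simp
    ultimately show "Z \<le> n div K" by simp
  qed
  have p0: "(\<lambda>j. (1 - c) ^ j) \<longlonglongrightarrow> 0" using c0 c1 by (intro LIMSEQ_power_zero) auto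
  have up: "(\<lambda>n. (1 - c) ^ (n div K)) \<longlonglongrightarrow> 0" using filterlim_compose[OF p0 fl] .
  have bl: "b \<longlonglongrightarrow> 0"
    by (rule tendsto_sandwich[of "\<lambda>_. 0" b sequentially "\<lambda>n. (1 - c) ^ (n div K)"])
       (use b0 bn up in auto)
  have "(\<lambda>n. 1 - b n) \<longlonglongrightarrow> 1 - 0" by (intro tendsto_intros bl)
  moreover have "measure_pmf.prob (pop_run V r A sel n) EE = 1 - b n" for n
    unfolding b_def compl by simp
  ultimately show ?thesis by simp
qed

end


theorem mainTheorem12:
  fixes V :: "'v set" and A :: "('v \<times> 'v) set" and r :: 'v
    and sel :: "('v \<times> 'v) set list \<Rightarrow> 'v set"
  assumes "finite V" and "A \<subseteq> V \<times> V" and "r \<in> V"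
    and "root_connected V r A"
    and "\<And>h. has_cluster V r (hd h) \<Longrightarrow> is_minimal_cluster V r (hd h) (sel h)"
  shows "((\<lambda>n. measure_pmf.prob (pop_run V r A sel n) {h. \<not> has_cluster V r (hd h)})
           \<longlonglongrightarrow> 1) \<and>
         (\<forall>S. S \<subseteq> A \<and> root_connected V r S \<longrightarrow>
          (\<lambda>n. measure_pmf.prob (pop_run V r A sel n) {h. hd h = S})
           \<longlonglongrightarrow> 1 / real (card {S'. S' \<subseteq> A \<and> root_connected V r S'}))"
proof -
  interpret cp V r A using assms(1-4) by unfold_locales
  have valid: "\<And>h. has_cluster V r (hd h) \<Longrightarrow> is_minimal_cluster V r (hd h) (sel h)" by (rule assms(5))
  define Good where "Good = {S'. S' \<subseteq> A \<and> root_connected V r S'}"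
  have good_iff: "root_connected V r S' = (\<not> has_cluster V r S')" if "S' \<subseteq> A" for S'
  proof -
    have "S' \<subseteq> V \<times> V" using that AV by blast
    then show ?thesis using has_cluster_iff[OF _ rV] by blast
  qed
  have Good_alt: "Good = {S'. S' \<subseteq> A \<and> \<not> has_cluster V r S'}" unfolding Good_def using good_iff by blast
  have finGood: "finite Good" unfolding Good_def using finA by (rule rev_finite_subset[OF finite_Pow_iff[THEN iffD2]]) auto
  have AGood: "A \<in> Good" unfolding Good_def using rcA by simp
  have cardG: "0 < card Good" using finGood AGood card_gt_0_iff by blast
  define nu where "nu n = map_pmf hd (pop_run V r A sel n)" for n
  have nc: "\<not> has_cluster V r S" if "S \<in> Good" for S using that Good_alt by blast
  have eqS: "pmf (nu n) S = pmf (mu n) S" if "S \<in> Good" for S n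
    unfolding nu_def mu_def using QB[OF valid nc[OF that]] QB[OF sel0_valid nc[OF that]] by simp
  have nomin: "\<not> is_minimal_cluster V r S D" if "S \<in> Good" for S D
    using hc_of_min nc[OF that] by blast
  have symS: "pmf (mu n) S = pmf (mu n) S'" if "S \<in> Good" "S' \<in> Good" for S S' n
  proof (rule mu_sym[of S S' A])
    show "S \<subseteq> A" "S' \<subseteq> A" using that unfolding Good_def by auto
    show "A \<subseteq> A" by simp
    show "S - A = S' - A" using that unfolding Good_def by auto
    show "\<forall>e\<in>A. \<forall>D. is_minimal_cluster V r S D \<longrightarrow> fst e \<notin> D" using nomin[OF that(1)] by blast
    show "\<forall>D. is_minimal_cluster V r S D = is_minimal_cluster V r S' D" using nomin that by blast
  qed
  have a_eq: "measure_pmf.prob (pop_run V r A sel n) EE = (\<Sum>S'\<in>Good. pmf (nu n) S')" for n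
  proof -
    have "measure_pmf.prob (pop_run V r A sel n) EE = measure_pmf.prob (nu n) {X. \<not> has_cluster V r X}"
      unfolding nu_def by (simp add: vimage_def)
    also have "\<dots> = measure_pmf.prob (nu n) ({X. \<not> has_cluster V r X} \<inter> set_pmf (nu n))"
      by (rule measure_Int_set_pmf[symmetric])
    also have "{X. \<not> has_cluster V r X} \<inter> set_pmf (nu n) = Good \<inter> set_pmf (nu n)"
      unfolding Good_alt nu_def using run_set by auto
    also have "measure_pmf.prob (nu n) (Good \<inter> set_pmf (nu n)) = measure_pmf.prob (nu n) Good"
      by (rule measure_Int_set_pmf)
    also have "\<dots> = (\<Sum>S'\<in>Good. pmf (nu n) S')" using finGood by (rule measure_measure_pmf_finite)
    finally show ?thesis .
  qed
  have part1: "(\<lambda>n. measure_pmf.prob (pop_run V r A sel n) EE) \<longlonglongrightarrow> 1"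
    by (rule term_limit[OF valid])
  have part2: "(\<lambda>n. measure_pmf.prob (pop_run V r A sel n) {h. hd h = S}) \<longlonglongrightarrow> 1 / real (card Good)"
    if S: "S \<subseteq> A \<and> root_connected V r S" for S
  proof -
    have SG: "S \<in> Good" using S unfolding Good_def by simp
    have "measure_pmf.prob (pop_run V r A sel n) EE = real (card Good) * measure_pmf.prob (pop_run V r A sel n) {h. hd h = S}" for n
    proof -
      have "(\<Sum>S'\<in>Good. pmf (nu n) S') = (\<Sum>S'\<in>Good. pmf (nu n) S)"
      proof (rule sum.cong[OF refl])
        fix S' assume "S' \<in> Good"
        then show "pmf (nu n) S' = pmf (nu n) S" using eqS SG symS by metis
      qed
      also have "\<dots> = real (card Good) * pmf (nu n) S" by simp
      also have "pmf (nu n) S = measure_pmf.prob (pop_run V r A sel n) {h. hd h = S}"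
        unfolding nu_def pmf_map vimage_def by simp
      finally show ?thesis using a_eq by simp
    qed
    then have "measure_pmf.prob (pop_run V r A sel n) {h. hd h = S} = measure_pmf.prob (pop_run V r A sel n) EE / real (card Good)" for n
      using cardG by (simp add: field_simps)
    moreover have "(\<lambda>n. measure_pmf.prob (pop_run V r A sel n) EE / real (card Good)) \<longlonglongrightarrow> 1 / real (card Good)"
      using part1 cardG by (intro tendsto_intros) auto
    ultimately show ?thesis by simp
  qed
  show ?thesis using part1 part2 unfolding Good_def by blast
qed


end
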